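(* Let $\mathcal{X}$ and $\mathcal{Y}$ be finite sets, let $\mathcal{M}\subseteq\mathcal{X}\times\mathcal{Y}$ be a nonempty set (the actual matches), and let $\hat{\mathcal{M}}_H\subseteq\mathcal{X}\times\mathcal{Y}$ be a fixed set (the matches identified by a holdout batch algorithm, chosen independently of the validation samples). Let $\mathcal{S}_{\mathcal{M}}$ be a sample drawn uniformly at random without replacement from $\mathcal{M}$, and let $\mathcal{S}_{\mathcal{X}}$ be a sample drawn uniformly at random without replacement from $\mathcal{X}$. Let $\hat{\mathcal{M}}\subseteq\mathcal{X}\times\mathcal{Y}$ be a set of identified matches (produced by a "complete" algorithm) which may depend arbitrarily on $\mathcal{S}_{\mathcal{M}}$ and $\mathcal{S}_{\mathcal{X}}$, and define its recall $R=|\hat{\mathcal{M}}\cap\mathcal{M}|/|\mathcal{M}|$. For $x\in\mathcal{X}$ let $m(x)=|\{y\in\mathcal{Y}:(x,y)\in\mathcal{M}\}|$, and let $k_y$ be an upper bound on $m(x)$ over all $x\in\mathcal{X}$. Then for any $\delta_1,\delta_2>0$, with probability at least $1-\delta_1-\delta_2$, $$R\ \ge\ p^-(\mathcal{M},\mathcal{S}_{\mathcal{M}},\mathbf{1}_{\hat{\mathcal{M}}_H},0,1,\delta_1)-\frac{|\hat{\mathcal{M}}_H\setminus\hat{\mathcal{M}}|}{|\mathcal{X}|\,p^-(\mathcal{X},\mathcal{S}_{\mathcal{X}},m,0,k_y,\delta_2)}.$$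
   Context: PAC bound rules: $p^+$ and $p^-$ are functions which, given a finite set $\mathcal{P}$ (population), a subset $\mathcal{S}\subseteq\mathcal{P}$, a function $f:\mathcal{P}\to\mathbb{R}$, reals $a\le b$ and $\delta>0$, return a real number, and satisfy the following: for every finite set $\mathcal{P}$ with $|\mathcal{P}|=n$, every sample size $s$, and every $f$ with $a\le f(x)\le b$ for all $x\in\mathcal{P}$, if $\mathcal{S}$ is a size-$s$ sample drawn uniformly at random without replacement from $\mathcal{P}$ and $\mu=\frac1n\sum_{x\in\mathcal{P}}f(x)$, then $\Pr\{\mu>p^+(\mathcal{P},\mathcal{S},f,a,b,\delta)\}\le\delta$ and $\Pr\{\mu<p^-(\mathcal{P},\mathcal{S},f,a,b,\delta)\}\le\delta$. $\mathbf{1}_{A}$ denotes the indicator function of a set $A$. *)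

theory Defs
  imports "HOL-Probability.Probability"
begin

definition sample_pmf :: "'a set \<Rightarrow> nat \<Rightarrow> 'a set pmf" where
  "sample_pmf P s = pmf_of_set {S. S \<subseteq> P \<and> card S = s}"

definition pop_mean :: "'a set \<Rightarrow> ('a \<Rightarrow> real) \<Rightarrow> real" where
  "pop_mean P f = (\<Sum>x\<in>P. f x) / real (card P)"

text \<open>The lower half of a PAC bound rule: Pr{mu < p^-(P,S,f,a,b,delta)} <= delta.\<close>
definition pac_lower ::
  "('a set \<Rightarrow> 'a set \<Rightarrow> ('a \<Rightarrow> real) \<Rightarrow> real \<Rightarrow> real \<Rightarrow> real \<Rightarrow> real) \<Rightarrow> bool" where
  "pac_lower p \<longleftrightarrow>
     (\<forall>P s f a b \<delta>. finite P \<and> P \<noteq> {} \<and> s \<le> card P \<and> a \<le> b \<and> \<delta> > 0 \<and>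
        (\<forall>x\<in>P. a \<le> f x \<and> f x \<le> b) \<longrightarrow>
        measure_pmf.prob (sample_pmf P s) {S. pop_mean P f < p P S f a b \<delta>} \<le> \<delta>)"

end

theory Submission
  imports Defs
begin

theorem theorem2:
  fixes X :: "'x set" and Y :: "'y set"
    and M MH :: "('x \<times> 'y) set"
    and Mhat :: "('x \<times> 'y) set \<Rightarrow> 'x set \<Rightarrow> ('x \<times> 'y) set"
    and pM :: "('x \<times> 'y) set \<Rightarrow> ('x \<times> 'y) set \<Rightarrow> (('x \<times> 'y) \<Rightarrow> real) \<Rightarrow> real \<Rightarrow> real \<Rightarrow> real \<Rightarrow> real"
    and pX :: "'x set \<Rightarrow> 'x set \<Rightarrow> ('x \<Rightarrow> real) \<Rightarrow> real \<Rightarrow> real \<Rightarrow> real \<Rightarrow> real"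
    and sM sX :: nat and ky \<delta>1 \<delta>2 :: real
  assumes "finite X" and "finite Y"
    and "M \<subseteq> X \<times> Y" and "M \<noteq> {}" and "MH \<subseteq> X \<times> Y"
    and "\<And>SM SX. Mhat SM SX \<subseteq> X \<times> Y"
    and "pac_lower pM" and "pac_lower pX"
    and "sM \<le> card M" and "sX \<le> card X"
    and "\<And>x. x \<in> X \<Longrightarrow> real (card {y \<in> Y. (x, y) \<in> M}) \<le> ky"
    and "\<delta>1 > 0" and "\<delta>2 > 0"
  shows "measure_pmf.prob (pair_pmf (sample_pmf M sM) (sample_pmf X sX))
           {(SM, SX).
              let Mh = Mhat SM SX;
                  R = real (card (Mh \<inter> M)) / real (card M);
                  a = real (card (MH - Mh));
                  d = real (card X) *
                      pX X SX (\<lambda>x. real (card {y \<in> Y. (x, y) \<in> M})) 0 ky \<delta>2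
              in (a = 0 \<or> d > 0) \<longrightarrow>
                 R \<ge> pM M SM (indicator MH) 0 1 \<delta>1 - a / d}
         \<ge> 1 - \<delta>1 - \<delta>2"
proof -
  let ?p = "pair_pmf (sample_pmf M sM) (sample_pmf X sX)"
  let ?m = "\<lambda>x. real (card {y \<in> Y. (x, y) \<in> M})"
  let ?A = "{SM. pop_mean M (indicator MH) < pM M SM (indicator MH) 0 1 \<delta>1}"
  let ?B = "{SX. pop_mean X ?m < pX X SX ?m 0 ky \<delta>2}"
  have fM: "finite M" using assms(1,2,3) finite_subset by blast
  have Xne: "X \<noteq> {}" using assms(3,4) by auto
  then obtain x0 where "x0 \<in> X" by auto
  hence ky0: "0 \<le> ky" using assms(11)[of x0] by (meson of_nat_0_le_iff order_trans)
  have MS: "M = Sigma X (\<lambda>x. {y \<in> Y. (x, y) \<in> M})" using assms(3) by auto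
  have cardM: "card M = (\<Sum>x\<in>X. card {y \<in> Y. (x, y) \<in> M})"
    by (subst MS, rule card_SigmaI) (use assms(1,2) in auto)
  have pmX: "pop_mean X ?m = real (card M) / real (card X)"
    unfolding pop_mean_def cardM by simp
  have pmM: "pop_mean M (indicator MH) = real (card (MH \<inter> M)) / real (card M)"
    proof -
    have "(\<Sum>x\<in>M. indicator MH x :: real) = real (\<Sum>x\<in>M. indicator MH x :: nat)"
      by (simp add: indicator_def of_nat_sum[symmetric] if_distrib cong: if_cong)
    also have "\<dots> = real (card (MH \<inter> M))"
      using sum_indicator_eq_card[OF fM, of MH] by (simp add: Int_commute)
    finally show ?thesis unfolding pop_mean_def by simp
  qed
  have PA: "measure_pmf.prob (sample_pmf M sM) ?A \<le> \<delta>1"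
    using assms(7) fM assms(4,9,12) unfolding pac_lower_def
    by (auto simp: indicator_def)
  have PB: "measure_pmf.prob (sample_pmf X sX) ?B \<le> \<delta>2"
    using assms(8,1,10,13,11) Xne ky0 unfolding pac_lower_def by auto
  have PA': "measure_pmf.prob ?p (fst -` ?A) \<le> \<delta>1"
    using PA by (metis measure_map_pmf map_fst_pair_pmf)
  have PB': "measure_pmf.prob ?p (snd -` ?B) \<le> \<delta>2"
    using PB by (metis measure_map_pmf map_snd_pair_pmf)
  let ?G = "{(SM, SX).
              let Mh = Mhat SM SX;
                  R = real (card (Mh \<inter> M)) / real (card M);
                  a = real (card (MH - Mh));
                  d = real (card X) *
                      pX X SX (\<lambda>x. real (card {y \<in> Y. (x, y) \<in> M})) 0 ky \<delta>2
              in (a = 0 \<or> d > 0) \<longrightarrow>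
                 R \<ge> pM M SM (indicator MH) 0 1 \<delta>1 - a / d}"
  have cM: "real (card M) > 0" using fM assms(4) by (simp add: card_gt_0_iff)
  have cX: "real (card X) > 0" using assms(1) Xne by (simp add: card_gt_0_iff)
  have sub: "UNIV - (fst -` ?A \<union> snd -` ?B) \<subseteq> ?G"
  proof (rule subsetI)
    fix z assume z: "z \<in> UNIV - (fst -` ?A \<union> snd -` ?B)"
    obtain SM SX where zz: "z = (SM, SX)" by fastforce
    have nA: "SM \<notin> ?A" and nB: "SX \<notin> ?B" using z zz by auto
    define Mh where "Mh = Mhat SM SX"
    define a where "a = real (card (MH - Mh))"
    define d where "d = real (card X) * pX X SX ?m 0 ky \<delta>2"
    define q where "q = pM M SM (indicator MH) 0 1 \<delta>1"
    have h1: "q \<le> real (card (MH \<inter> M)) / real (card M)"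
      using nA pmM q_def by simp
    have h2: "d \<le> real (card M)"
      using nB pmX cX unfolding d_def by (simp add: field_simps)
    have fMH: "finite MH" using assms(1,2,5) finite_subset by blast
    have "MH \<inter> M \<subseteq> (Mh \<inter> M) \<union> (MH - Mh)" by auto
    hence "card (MH \<inter> M) \<le> card ((Mh \<inter> M) \<union> (MH - Mh))"
      by (intro card_mono) (use fM fMH in auto)
    also have "\<dots> \<le> card (Mh \<inter> M) + card (MH - Mh)" by (rule card_Un_le)
    finally have h3: "real (card (MH \<inter> M)) \<le> real (card (Mh \<inter> M)) + a"
      unfolding a_def by linarith
    have a0: "a \<ge> 0" unfolding a_def by simp
    have "(a = 0 \<or> d > 0) \<longrightarrow> q - a / d \<le> real (card (Mh \<inter> M)) / real (card M)"
    proof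
      assume c: "a = 0 \<or> d > 0"
      have "a / real (card M) \<le> a / d"
      proof (cases "a = 0")
        case False with c have "d > 0" by auto
        thus ?thesis using h2 a0 by (intro divide_left_mono) auto
      qed simp
      moreover have "q \<le> real (card (Mh \<inter> M)) / real (card M) + a / real (card M)"
        proof -
        have "real (card (MH \<inter> M)) / real (card M) \<le> (real (card (Mh \<inter> M)) + a) / real (card M)"
          using h3 cM by (intro divide_right_mono) auto
        thus ?thesis using h1 by (simp add: add_divide_distrib)
      qed
      ultimately show "q - a / d \<le> real (card (Mh \<inter> M)) / real (card M)" by linarith
    qed
    hence "(real (card (MH - Mhat SM SX)) = 0 \<or> 0 < real (card X) * pX X SX ?m 0 ky \<delta>2) \<longrightarrow>
       pM M SM (indicator MH) 0 1 \<delta>1 - real (card (MH - Mhat SM SX)) / (real (card X) * pX X SX ?m 0 ky \<delta>2)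
       \<le> real (card (Mhat SM SX \<inter> M)) / real (card M)"
      unfolding a_def d_def q_def Mh_def .
    thus "z \<in> ?G" unfolding zz Let_def by simp
  qed
  let ?U = "fst -` ?A \<union> snd -` ?B"
  have c1: "measure_pmf.prob ?p (UNIV - ?U) \<le> measure_pmf.prob ?p ?G"
    by (rule measure_pmf.finite_measure_mono[OF sub]) simp
  have c2: "measure_pmf.prob ?p (UNIV - ?U) = 1 - measure_pmf.prob ?p ?U"
    by (subst measure_pmf.prob_compl[symmetric]) auto
  have c3: "measure_pmf.prob ?p ?U \<le>
      measure_pmf.prob ?p (fst -` ?A) + measure_pmf.prob ?p (snd -` ?B)"
    by (rule measure_Un_le) simp_all
  show ?thesis using c1 c2 c3 PA' PB' by linarith
qed

end
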